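(* Let $H$ be a Hilbert space and $U_{ik}\in B(H)$, $i,k=1,\dots,n$, operators satisfying relations (R1)–(R5); put $P_{ik}=U_{ik}^*U_{ik}$ and $Q_{ik}=U_{ik}U_{ik}^*$. Then for all $i,j,k,l$: $P_{ik}P_{il}=0$ and $Q_{ik}Q_{il}=0$ if $k\neq l$; $P_{ik}P_{jk}=0$ and $Q_{ik}Q_{jk}=0$ if $i\neq j$.
   Context: $n\ge2$, $\theta\in M_n(\mathbb R)$ skew-symmetric, $\omega_{ij}=e^{2\pi i\theta_{ij}}$. Relations, for all $i,j,k,l\in\{1,\dots,n\}$: (R1) $U_{ik}U_{jl}+\omega_{ji}U_{jk}U_{il}=\omega_{kl}U_{il}U_{jk}+\omega_{ji}\omega_{kl}U_{jl}U_{ik}$; (R2) $\sum_iU_{ik}U_{il}^*=\delta_{kl}1$; (R3) $\sum_iU_{il}^*U_{ik}=\delta_{kl}1$; (R4) $U_{jk}U_{ik}^*=0$ for $i\neq j$; (R5) $U_{ik}^*U_{jk}=0$ for $i\neq j$. *)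

theory Defs
  imports "HOL-Analysis.Analysis"
begin

text \<open>The HOL library only provides real inner product spaces, so the complex notions are
  introduced here as type classes.\<close>

class complex_vector = real_vector +
  fixes scaleC :: "complex \<Rightarrow> 'a \<Rightarrow> 'a"
  assumes scaleC_scaleR: "scaleC (complex_of_real r) x = scaleR r x"
    and scaleC_add_right: "scaleC a (x + y) = scaleC a x + scaleC a y"
    and scaleC_add_left: "scaleC (a + b) x = scaleC a x + scaleC b x"
    and scaleC_scaleC: "scaleC a (scaleC b x) = scaleC (a * b) x"
    and scaleC_one: "scaleC 1 x = x"

class complex_inner = complex_vector + real_normed_vector +
  fixes cinner :: "'a \<Rightarrow> 'a \<Rightarrow> complex"
  assumes cinner_commute: "cinner x y = cnj (cinner y x)"
    and cinner_add_left: "cinner (x + y) z = cinner x z + cinner y z"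
    and cinner_scaleC_left: "cinner (scaleC r x) y = cnj r * cinner x y"
    and cinner_self_real: "Im (cinner x x) = 0"
    and cinner_self_nonneg: "0 \<le> Re (cinner x x)"
    and cinner_self_eq_zero: "cinner x x = 0 \<longleftrightarrow> x = 0"
    and norm_eq_sqrt_cinner: "norm x = sqrt (Re (cinner x x))"

class chilbert = complex_inner + complete_space

definition bounded_clinear :: "('a::complex_inner \<Rightarrow> 'b::complex_inner) \<Rightarrow> bool" where
  "bounded_clinear f \<longleftrightarrow>
     (\<forall>x y. f (x + y) = f x + f y) \<and> (\<forall>c x. f (scaleC c x) = scaleC c (f x)) \<and>
     (\<exists>K. \<forall>x. norm (f x) \<le> norm x * K)"

definition is_adjoint :: "('a::complex_inner \<Rightarrow> 'a) \<Rightarrow> ('a \<Rightarrow> 'a) \<Rightarrow> bool" where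
  "is_adjoint f g \<longleftrightarrow> (\<forall>x y. cinner (f x) y = cinner x (g y))"

definition omega :: "(nat \<Rightarrow> nat \<Rightarrow> real) \<Rightarrow> nat \<Rightarrow> nat \<Rightarrow> complex" where
  "omega \<theta> i j = exp (2 * pi * \<i> * complex_of_real (\<theta> i j))"

end

theory Submission
  imports Defs
begin


lemma add_sum_lemma:
  fixes f :: "'a::ab_group_add \<Rightarrow> 'b::ab_group_add"
  assumes "\<forall>a b. f (a + b) = f a + f b" and "finite A"
  shows "f (sum g A) = (\<Sum>j\<in>A. f (g j))"
proof -
  have "f (0 + 0) = f 0 + f 0" using assms(1) by blast
  hence f0: "f 0 = 0" by simp
  show ?thesis using assms(2) by (induction A rule: finite_induct) (simp_all add: f0 assms(1))
qed

lemma sum_single_lemma: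
  assumes "finite A" "i \<in> A" "\<forall>j\<in>A. j \<noteq> i \<longrightarrow> h j = (0::'a::comm_monoid_add)"
  shows "sum h A = h i"
proof -
  have "sum h A = h i + sum h (A - {i})" using assms by (simp add: sum.remove)
  also have "sum h (A - {i}) = 0" using assms(3) by (intro sum.neutral) auto
  finally show ?thesis by simp
qed

lemma cinner_add_right_lemma: "cinner (z::'a::complex_inner) (x + y) = cinner z x + cinner z y"
proof -
  have "cinner z (x + y) = cnj (cinner (x + y) z)" by (rule cinner_commute)
  also have "\<dots> = cnj (cinner x z) + cnj (cinner y z)" by (simp add: cinner_add_left)
  also have "\<dots> = cinner z x + cinner z y" by (metis cinner_commute)
  finally show ?thesis .
qed

lemma cinner_neg_left_lemma: "cinner (- (x::'a::complex_inner)) y = - cinner x y"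
proof -
  have "cinner (x + - x) y = cinner x y + cinner (- x) y" by (rule cinner_add_left)
  moreover have "cinner (0::'a) y = 0"
  proof -
    have "cinner ((0::'a) + 0) y = cinner 0 y + cinner 0 y" by (rule cinner_add_left)
    thus ?thesis by simp
  qed
  ultimately show ?thesis by (simp add: eq_neg_iff_add_eq_0 add.commute)
qed

lemma cinner_ext_lemma:
  assumes "\<forall>w. cinner w x = cinner w (y::'a::complex_inner)"
  shows "x = y"
proof -
  have e: "cinner (x - y) (x - y) = cinner x (x - y) - cinner y (x - y)"
    using cinner_add_left[of x "- y" "x - y"] cinner_neg_left_lemma[of y "x - y"] by simp
  have a: "cinner x (x - y) = cnj (cinner (x - y) x)" by (rule cinner_commute)
  have b: "cinner y (x - y) = cnj (cinner (x - y) y)" by (rule cinner_commute)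
  have "cinner (x - y) x = cinner (x - y) y" using assms by blast
  with e a b have "cinner (x - y) (x - y) = 0" by simp
  hence "x - y = 0" by (simp add: cinner_self_eq_zero)
  thus ?thesis by simp
qed

lemma adjoint_additive_lemma:
  assumes "is_adjoint f g" "\<forall>a b. f (a + b) = f a + f b"
  shows "\<forall>a b. g (a + b) = g a + g b"
proof (intro allI)
  fix a b
  show "g (a + b) = g a + g b"
  proof (rule cinner_ext_lemma, intro allI)
    fix w
    have "cinner w (g (a + b)) = cinner (f w) (a + b)" using assms(1) unfolding is_adjoint_def by simp
    also have "\<dots> = cinner (f w) a + cinner (f w) b" by (rule cinner_add_right_lemma)
    also have "\<dots> = cinner w (g a) + cinner w (g b)" using assms(1) unfolding is_adjoint_def by simp
    also have "\<dots> = cinner w (g a + g b)" by (simp add: cinner_add_right_lemma)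
    finally show "cinner w (g (a + b)) = cinner w (g a + g b)" .
  qed
qed

theorem corollary3p11:
  fixes n :: nat and \<theta> :: "nat \<Rightarrow> nat \<Rightarrow> real"
    and U Ustar :: "nat \<Rightarrow> nat \<Rightarrow> 'h::chilbert \<Rightarrow> 'h"
  assumes n2: "n \<ge> 2"
    and skew: "\<forall>i\<in>{1..n}. \<forall>j\<in>{1..n}. \<theta> j i = - \<theta> i j"
    and bdd: "\<forall>i\<in>{1..n}. \<forall>k\<in>{1..n}. bounded_clinear (U i k)"
    and adj: "\<forall>i\<in>{1..n}. \<forall>k\<in>{1..n}. is_adjoint (U i k) (Ustar i k)"
    and R1: "\<forall>i\<in>{1..n}. \<forall>j\<in>{1..n}. \<forall>k\<in>{1..n}. \<forall>l\<in>{1..n}. \<forall>x.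
       U i k (U j l x) + scaleC (omega \<theta> j i) (U j k (U i l x))
       = scaleC (omega \<theta> k l) (U i l (U j k x))
         + scaleC (omega \<theta> j i * omega \<theta> k l) (U j l (U i k x))"
    and R2: "\<forall>k\<in>{1..n}. \<forall>l\<in>{1..n}. \<forall>x.
       (\<Sum>i\<in>{1..n}. U i k (Ustar i l x)) = (if k = l then x else 0)"
    and R3: "\<forall>k\<in>{1..n}. \<forall>l\<in>{1..n}. \<forall>x.
       (\<Sum>i\<in>{1..n}. Ustar i l (U i k x)) = (if k = l then x else 0)"
    and R4: "\<forall>i\<in>{1..n}. \<forall>j\<in>{1..n}. \<forall>k\<in>{1..n}. i \<noteq> j \<longrightarrow>
       (\<forall>x. U j k (Ustar i k x) = 0)"
    and R5: "\<forall>i\<in>{1..n}. \<forall>j\<in>{1..n}. \<forall>k\<in>{1..n}. i \<noteq> j \<longrightarrow>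
       (\<forall>x. Ustar i k (U j k x) = 0)"
  shows "\<forall>i\<in>{1..n}. \<forall>j\<in>{1..n}. \<forall>k\<in>{1..n}. \<forall>l\<in>{1..n}.
     (k \<noteq> l \<longrightarrow>
        (\<forall>x. Ustar i k (U i k (Ustar i l (U i l x))) = 0) \<and>
        (\<forall>x. U i k (Ustar i k (U i l (Ustar i l x))) = 0)) \<and>
     (i \<noteq> j \<longrightarrow>
        (\<forall>x. Ustar i k (U i k (Ustar j k (U j k x))) = 0) \<and>
        (\<forall>x. U i k (Ustar i k (U j k (Ustar j k x))) = 0))"
proof -
  have Uadd: "\<forall>a b. U i k (a + b) = U i k a + U i k b" if "i \<in> {1..n}" "k \<in> {1..n}" for i k
    using bdd that unfolding bounded_clinear_def by blast
  have Sadd: "\<forall>a b. Ustar i k (a + b) = Ustar i k a + Ustar i k b" if "i \<in> {1..n}" "k \<in> {1..n}" for i k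
    using adjoint_additive_lemma[OF _ Uadd[OF that]] adj that by blast
  have Uz: "U i k 0 = 0" if "i \<in> {1..n}" "k \<in> {1..n}" for i k
  proof -
    have "U i k (0 + 0) = U i k 0 + U i k 0" using Uadd[OF that] by blast
    thus ?thesis by simp
  qed
  have Sz: "Ustar i k 0 = 0" if "i \<in> {1..n}" "k \<in> {1..n}" for i k
  proof -
    have "Ustar i k (0 + 0) = Ustar i k 0 + Ustar i k 0" using Sadd[OF that] by blast
    thus ?thesis by simp
  qed
  have QU: "U i l (Ustar i l (U i k x)) = 0"
    if i: "i \<in> {1..n}" and k: "k \<in> {1..n}" and l: "l \<in> {1..n}" and kl: "k \<noteq> l" for i k l x
  proof -
    have s0: "(\<Sum>j\<in>{1..n}. Ustar j l (U j k x)) = (if k = l then x else 0)"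
      using bspec[OF bspec[OF R3 k] l] by (rule spec)
    have "(if k = l then x else 0) = 0" using kl by simp
    with s0 have s1: "(\<Sum>j\<in>{1..n}. Ustar j l (U j k x)) = 0" by (rule trans)
    have "0 = U i l (\<Sum>j\<in>{1..n}. Ustar j l (U j k x))"
      by (simp only: s1 Uz[OF i l])
    also have "\<dots> = (\<Sum>j\<in>{1..n}. U i l (Ustar j l (U j k x)))"
      by (rule add_sum_lemma[OF Uadd[OF i l], where g="\<lambda>j. Ustar j l (U j k x)"]) simp
    also have "\<dots> = U i l (Ustar i l (U i k x))"
    proof (rule sum_single_lemma[where i=i and h="\<lambda>j. U i l (Ustar j l (U j k x))"])
      show "\<forall>j\<in>{1..n}. j \<noteq> i \<longrightarrow> U i l (Ustar j l (U j k x)) = 0"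
      proof (intro ballI impI)
        fix j assume j: "j \<in> {1..n}" and ji: "j \<noteq> i"
        show "U i l (Ustar j l (U j k x)) = 0"
          by (rule spec[OF mp[OF bspec[OF bspec[OF bspec[OF R4 j] i] l] ji]])
      qed
    qed (use i in auto)
    finally show ?thesis by simp
  qed
  have PS: "Ustar i k (U i k (Ustar i l y)) = 0"
    if i: "i \<in> {1..n}" and k: "k \<in> {1..n}" and l: "l \<in> {1..n}" and kl: "k \<noteq> l" for i k l y
  proof -
    have s0: "(\<Sum>j\<in>{1..n}. U j k (Ustar j l y)) = (if k = l then y else 0)"
      using bspec[OF bspec[OF R2 k] l] by (rule spec)
    have "(if k = l then y else 0) = 0" using kl by simp
    with s0 have s1: "(\<Sum>j\<in>{1..n}. U j k (Ustar j l y)) = 0" by (rule trans)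
    have "0 = Ustar i k (\<Sum>j\<in>{1..n}. U j k (Ustar j l y))"
      by (simp only: s1 Sz[OF i k])
    also have "\<dots> = (\<Sum>j\<in>{1..n}. Ustar i k (U j k (Ustar j l y)))"
      by (rule add_sum_lemma[OF Sadd[OF i k], where g="\<lambda>j. U j k (Ustar j l y)"]) simp
    also have "\<dots> = Ustar i k (U i k (Ustar i l y))"
    proof (rule sum_single_lemma[where i=i and h="\<lambda>j. Ustar i k (U j k (Ustar j l y))"])
      show "\<forall>j\<in>{1..n}. j \<noteq> i \<longrightarrow> Ustar i k (U j k (Ustar j l y)) = 0"
      proof (intro ballI impI)
        fix j assume j: "j \<in> {1..n}" and ji: "j \<noteq> i"
        have ij: "i \<noteq> j" using ji by (rule not_sym)
        show "Ustar i k (U j k (Ustar j l y)) = 0"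
          by (rule spec[OF mp[OF bspec[OF bspec[OF bspec[OF R5 i] j] k] ij]])
      qed
    qed (use i in auto)
    finally show ?thesis by simp
  qed
  show ?thesis
  proof (intro ballI)
    fix i j k l assume i: "i \<in> {1..n}" and j: "j \<in> {1..n}" and k: "k \<in> {1..n}" and l: "l \<in> {1..n}"
    have A: "\<forall>x. Ustar i k (U i k (Ustar i l (U i l x))) = 0" if kl: "k \<noteq> l"
    proof
      fix x show "Ustar i k (U i k (Ustar i l (U i l x))) = 0" by (rule PS[OF i k l kl])
    qed
    have B: "\<forall>x. U i k (Ustar i k (U i l (Ustar i l x))) = 0" if kl: "k \<noteq> l"
    proof
      fix x
      have lk: "l \<noteq> k" using kl by (rule not_sym)
      show "U i k (Ustar i k (U i l (Ustar i l x))) = 0" by (rule QU[OF i l k lk])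
    qed
    have C: "\<forall>x. Ustar i k (U i k (Ustar j k (U j k x))) = 0" if ij: "i \<noteq> j"
    proof
      fix x
      have ji: "j \<noteq> i" using ij by (rule not_sym)
      have "U i k (Ustar j k (U j k x)) = 0"
        by (rule spec[OF mp[OF bspec[OF bspec[OF bspec[OF R4 j] i] k] ji]])
      then show "Ustar i k (U i k (Ustar j k (U j k x))) = 0" by (simp only: Sz[OF i k])
    qed
    have D: "\<forall>x. U i k (Ustar i k (U j k (Ustar j k x))) = 0" if ij: "i \<noteq> j"
    proof
      fix x
      have "Ustar i k (U j k (Ustar j k x)) = 0"
        by (rule spec[OF mp[OF bspec[OF bspec[OF bspec[OF R5 i] j] k] ij]])
      then show "U i k (Ustar i k (U j k (Ustar j k x))) = 0" by (simp only: Uz[OF i k])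
    qed
    show "(k \<noteq> l \<longrightarrow>
        (\<forall>x. Ustar i k (U i k (Ustar i l (U i l x))) = 0) \<and>
        (\<forall>x. U i k (Ustar i k (U i l (Ustar i l x))) = 0)) \<and>
     (i \<noteq> j \<longrightarrow>
        (\<forall>x. Ustar i k (U i k (Ustar j k (U j k x))) = 0) \<and>
        (\<forall>x. U i k (Ustar i k (U j k (Ustar j k x))) = 0))"
    proof (intro conjI impI)
      assume h: "k \<noteq> l"
      show "\<forall>x. Ustar i k (U i k (Ustar i l (U i l x))) = 0" by (rule A[OF h])
      show "\<forall>x. U i k (Ustar i k (U i l (Ustar i l x))) = 0" by (rule B[OF h])
    next
      assume h: "i \<noteq> j"
      show "\<forall>x. Ustar i k (U i k (Ustar j k (U j k x))) = 0" by (rule C[OF h])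
      show "\<forall>x. U i k (Ustar i k (U j k (Ustar j k x))) = 0" by (rule D[OF h])
    qed
  qed
qed

end
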